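(* Let $q$ be a prime power, $g,s\ge 1$ integers, and $V=\mathrm{GF}(q^g)^s$ regarded as a $gs$-dimensional vector space over $\mathrm{GF}(q)$. For every integer $k\ge 1$, the number $\#\mathcal{F}_k$ of fat $k$-dimensional $\mathrm{GF}(q)$-subspaces of $V$ is \[ \#\mathcal{F}_k=q^{(g-1)\binom{k}{2}}\prod_{i=0}^{k-1}\frac{q^{g(s-i)}-1}{q^{k-i}-1}. \]
   Context: A $\mathrm{GF}(q)$-subspace $U\le V$ is called fat if $\dim_{\mathrm{GF}(q^g)}\langle U\rangle_{\mathrm{GF}(q^g)}=\dim_{\mathrm{GF}(q)}U$, where $\langle U\rangle_{\mathrm{GF}(q^g)}$ is the $\mathrm{GF}(q^g)$-span of $U$; equivalently, some (and then every) $\mathrm{GF}(q)$-basis of $U$ is linearly independent over $\mathrm{GF}(q^g)$. $\mathcal{F}_k$ denotes the set of fat $k$-dimensional $\mathrm{GF}(q)$-subspaces of $V$. *)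

theory Defs
  imports "HOL-Analysis.Finite_Cartesian_Product"
begin

text \<open>Vectors of V = K^s are elements of type 'a^'n with CARD('n) = s, where the
  field K = GF(q^g) is a finite field type 'a and GF(q) is a subfield F of it.\<close>

definition smul_vec :: "'a::field \<Rightarrow> 'a^'n \<Rightarrow> 'a^'n" where
  "smul_vec c v = (\<chi> i. c * v $ i)"

text \<open>Span over the subfield F (F = UNIV gives the span over K).\<close>
definition span_over :: "'a::field set \<Rightarrow> ('a^'n) set \<Rightarrow> ('a^'n) set" where
  "span_over F B = {\<Sum>b\<in>B'. smul_vec (c b) b | B' c. finite B' \<and> B' \<subseteq> B \<and> c ` B' \<subseteq> F}"

definition indep_over :: "'a::field set \<Rightarrow> ('a^'n) set \<Rightarrow> bool" where
  "indep_over F B = (\<forall>B' c. finite B' \<and> B' \<subseteq> B \<and> c ` B' \<subseteq> F \<and>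
      (\<Sum>b\<in>B'. smul_vec (c b) b) = 0 \<longrightarrow> (\<forall>b\<in>B'. c b = 0))"

definition subspace_over :: "'a::field set \<Rightarrow> ('a^'n) set \<Rightarrow> bool" where
  "subspace_over F U = (0 \<in> U \<and> (\<forall>x\<in>U. \<forall>y\<in>U. x + y \<in> U) \<and> (\<forall>c\<in>F. \<forall>x\<in>U. smul_vec c x \<in> U))"

definition has_dim_over :: "'a::field set \<Rightarrow> ('a^'n) set \<Rightarrow> nat \<Rightarrow> bool" where
  "has_dim_over F U k = (\<exists>B. finite B \<and> card B = k \<and> B \<subseteq> U \<and> indep_over F B \<and> span_over F B = U)"

definition is_subfield :: "'a::field set \<Rightarrow> bool" where
  "is_subfield F = (0 \<in> F \<and> 1 \<in> F \<and> (\<forall>x\<in>F. \<forall>y\<in>F. x + y \<in> F \<and> x * y \<in> F) \<and>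
      (\<forall>x\<in>F. - x \<in> F \<and> inverse x \<in> F))"

definition fat_subspaces :: "'a::field set \<Rightarrow> nat \<Rightarrow> ('a^'n) set set" where
  "fat_subspaces F k = {U. subspace_over F U \<and> has_dim_over F U k \<and>
      has_dim_over UNIV (span_over UNIV U) k}"

end

theory Submission
  imports Defs
begin

lemma smul_simps:
  "smul_vec 0 v = 0" "smul_vec 1 v = v" "smul_vec a 0 = 0"
  "smul_vec a (smul_vec b v) = smul_vec (a*b) v"
  "smul_vec (a+b) v = smul_vec a v + smul_vec b v"
  "smul_vec a (v+w) = smul_vec a v + smul_vec a w"
  "smul_vec (-a) v = - smul_vec a v"
  "smul_vec (a-b) v = smul_vec a v - smul_vec b v"
  by (auto simp: smul_vec_def vec_eq_iff algebra_simps)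

lemma smul_sum: "smul_vec a (sum f B) = (\<Sum>b\<in>B. smul_vec a (f b))"
  by (induction B rule: infinite_finite_induct) (auto simp: smul_simps)

definition lc :: "('a::field^'n) set \<Rightarrow> ('a^'n \<Rightarrow> 'a) \<Rightarrow> 'a^'n" where
  "lc B c = (\<Sum>b\<in>B. smul_vec (c b) b)"

lemma subF:
  assumes "is_subfield F"
  shows "0 \<in> F" "1 \<in> F" "x \<in> F \<Longrightarrow> y \<in> F \<Longrightarrow> x + y \<in> F"
    "x \<in> F \<Longrightarrow> y \<in> F \<Longrightarrow> x * y \<in> F" "x \<in> F \<Longrightarrow> -x \<in> F"
    "x \<in> F \<Longrightarrow> inverse x \<in> F" "x \<in> F \<Longrightarrow> y \<in> F \<Longrightarrow> x - y \<in> F"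
    "x \<in> F \<Longrightarrow> y \<in> F \<Longrightarrow> x / y \<in> F"
  using assms unfolding is_subfield_def
  by (auto simp: divide_inverse) (metis diff_conv_add_uminus)

lemma span_lc:
  assumes "is_subfield F" "finite B"
  shows "span_over F B = {lc B c | c. c ` B \<subseteq> F}"
proof
  show "span_over F B \<subseteq> {lc B c | c. c ` B \<subseteq> F}"
  proof
    fix x assume "x \<in> span_over F B"
    then obtain B' c where h: "finite B'" "B' \<subseteq> B" "c ` B' \<subseteq> F" "x = (\<Sum>b\<in>B'. smul_vec (c b) b)"
      unfolding span_over_def by blast
    define d where "d b = (if b \<in> B' then c b else 0)" for b
    have "lc B d = (\<Sum>b\<in>B'. smul_vec (d b) b)"
      unfolding lc_def by (rule sum.mono_neutral_right) (use assms h in \<open>auto simp: d_def smul_simps\<close>)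
    also have "\<dots> = x" using h by (auto simp: d_def intro!: sum.cong)
    finally have "lc B d = x" .
    moreover have "d ` B \<subseteq> F" using h subF(1)[OF assms(1)] by (auto simp: d_def)
    ultimately show "x \<in> {lc B c | c. c ` B \<subseteq> F}" by (intro CollectI exI[of _ d]) simp
  qed
next
  show "{lc B c | c. c ` B \<subseteq> F} \<subseteq> span_over F B"
    using assms unfolding span_over_def lc_def by blast
qed

lemma indep_lc:
  assumes "is_subfield F" "finite B"
  shows "indep_over F B \<longleftrightarrow> (\<forall>c. c ` B \<subseteq> F \<and> lc B c = 0 \<longrightarrow> (\<forall>b\<in>B. c b = 0))"
proof
  assume "indep_over F B" then show "\<forall>c. c ` B \<subseteq> F \<and> lc B c = 0 \<longrightarrow> (\<forall>b\<in>B. c b = 0)"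
    using assms unfolding indep_over_def lc_def by blast
next
  assume H: "\<forall>c. c ` B \<subseteq> F \<and> lc B c = 0 \<longrightarrow> (\<forall>b\<in>B. c b = 0)"
  show "indep_over F B" unfolding indep_over_def
  proof (intro allI impI)
    fix B' c assume h: "finite B' \<and> B' \<subseteq> B \<and> c ` B' \<subseteq> F \<and> (\<Sum>b\<in>B'. smul_vec (c b) b) = 0"
    define d where "d b = (if b \<in> B' then c b else 0)" for b
    have "lc B d = (\<Sum>b\<in>B'. smul_vec (d b) b)"
      unfolding lc_def by (rule sum.mono_neutral_right) (use assms h in \<open>auto simp: d_def smul_simps\<close>)
    also have "\<dots> = 0" using h by (auto simp: d_def intro!: sum.cong)
    finally have "lc B d = 0" .
    moreover have "d ` B \<subseteq> F" using h subF(1)[OF assms(1)] by (auto simp: d_def)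
    ultimately have "\<forall>b\<in>B. d b = 0" using H[rule_format, of d] by simp
    then show "\<forall>b\<in>B'. c b = 0" using h unfolding d_def by (metis subsetD)
  qed
qed

lemma indep_mono: "indep_over F B \<Longrightarrow> A \<subseteq> B \<Longrightarrow> indep_over F A"
  unfolding indep_over_def by blast

lemma indep_UNIV: "indep_over UNIV B \<Longrightarrow> indep_over F B"
  unfolding indep_over_def by blast


lemma lc_add: "lc B c + lc B d = lc B (\<lambda>b. c b + d b)"
  unfolding lc_def by (simp add: smul_simps sum.distrib)
lemma lc_smul: "smul_vec a (lc B c) = lc B (\<lambda>b. a * c b)"
  unfolding lc_def by (simp add: smul_simps smul_sum)
lemma lc_zero: "lc B (\<lambda>b. 0) = 0"
  unfolding lc_def by (simp add: smul_simps)
lemma lc_diff: "lc B c - lc B d = lc B (\<lambda>b. c b - d b)"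
  unfolding lc_def by (simp add: smul_simps sum_subtractf)

lemma span_subspace:
  fixes B :: "('a::{finite,field}^'n) set"
  assumes "is_subfield F"
  shows "subspace_over F (span_over F B)"
  unfolding span_lc[OF assms finite] subspace_over_def
proof (intro conjI ballI)
  show "0 \<in> {lc B c |c. c ` B \<subseteq> F}" using lc_zero subF(1)[OF assms] by force
  fix x y assume "x \<in> {lc B c |c. c ` B \<subseteq> F}" "y \<in> {lc B c |c. c ` B \<subseteq> F}"
  then obtain c d where "x = lc B c" "y = lc B d" "c ` B \<subseteq> F" "d ` B \<subseteq> F" by blast
  then show "x + y \<in> {lc B c |c. c ` B \<subseteq> F}"
    using subF(3)[OF assms] by (auto simp: lc_add intro!: exI[of _ "\<lambda>b. c b + d b"])
next
  fix a x assume "a \<in> F" "x \<in> {lc B c |c. c ` B \<subseteq> F}"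
  then obtain c where "x = lc B c" "c ` B \<subseteq> F" by blast
  then show "smul_vec a x \<in> {lc B c |c. c ` B \<subseteq> F}"
    using subF(4)[OF assms] \<open>a \<in> F\<close> by (auto simp: lc_smul intro!: exI[of _ "\<lambda>b. a * c b"])
qed

lemma span_sup:
  fixes B :: "('a::{finite,field}^'n) set"
  assumes "is_subfield F"
  shows "B \<subseteq> span_over F B"
proof
  fix v assume "v \<in> B"
  have "(\<Sum>b\<in>{v}. smul_vec ((\<lambda>_. 1) b) b) = v" by (simp add: smul_simps)
  moreover have "(\<lambda>_. 1) ` {v} \<subseteq> F" using subF(2)[OF assms] by simp
  ultimately show "v \<in> span_over F B" unfolding span_over_def using \<open>v \<in> B\<close>
    by (intro CollectI exI[of _ "{v}"] exI[of _ "\<lambda>_. 1"]) simp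
qed

lemma subspace_sum:
  fixes W :: "('a::{finite,field}^'n) set"
  assumes "subspace_over F W" "\<And>b. b \<in> B \<Longrightarrow> f b \<in> W"
  shows "sum f B \<in> W"
  using assms(2)
proof (induction B rule: infinite_finite_induct)
  case (infinite A) then show ?case using assms(1) by (simp add: subspace_over_def)
next
  case empty then show ?case using assms(1) by (simp add: subspace_over_def)
next
  case (insert x A)
  have "f x \<in> W" "sum f A \<in> W" using insert by auto
  then show ?case using assms(1) insert(1,2) unfolding subspace_over_def by simp
qed

lemma span_least:
  fixes W :: "('a::{finite,field}^'n) set"
  assumes "is_subfield F" "subspace_over F W" "B \<subseteq> W"
  shows "span_over F B \<subseteq> W"
proof
  fix x assume "x \<in> span_over F B"
  then obtain c where h: "c ` B \<subseteq> F" "x = lc B c"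
    unfolding span_lc[OF assms(1) finite] by blast
  show "x \<in> W" unfolding h(2) lc_def
  proof (rule subspace_sum[OF assms(2)])
    fix b assume "b \<in> B"
    then have "c b \<in> F" "b \<in> W" using h(1) assms(3) by blast+
    then show "smul_vec (c b) b \<in> W" using assms(2) unfolding subspace_over_def by blast
  qed
qed

lemma span_mono: "A \<subseteq> B \<Longrightarrow> span_over F A \<subseteq> span_over F B"
  unfolding span_over_def by (smt (verit) Collect_mono_iff order_trans)

lemma span_F_UNIV: "F \<subseteq> G \<Longrightarrow> span_over F A \<subseteq> span_over G A"
  unfolding span_over_def by (smt (verit) Collect_mono_iff order_trans)

lemma is_subfield_UNIV: "is_subfield UNIV" by (simp add: is_subfield_def)

lemma smul_neg: "smul_vec a (- v) = - smul_vec a v"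
  by (auto simp: smul_vec_def vec_eq_iff)

lemma lc_insert: "v \<notin> B \<Longrightarrow> lc (insert v (B::('a::{finite,field}^'n) set)) c = smul_vec (c v) v + lc B c"
  unfolding lc_def by simp

lemma lc_cong: "(\<And>b. b \<in> B \<Longrightarrow> c b = d b) \<Longrightarrow> lc B c = lc B d"
  unfolding lc_def by simp

lemma indep_lcD:
  fixes B :: "('a::{finite,field}^'n) set"
  assumes "is_subfield F" "indep_over F B" "c ` B \<subseteq> F" "lc B c = 0" "b \<in> B"
  shows "c b = 0"
  using assms indep_lc[OF assms(1) finite, of B] by metis

lemma indep_lcI:
  fixes B :: "('a::{finite,field}^'n) set"
  assumes "is_subfield F" "\<And>c. c ` B \<subseteq> F \<Longrightarrow> lc B c = 0 \<Longrightarrow> (\<forall>b\<in>B. c b = 0)"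
  shows "indep_over F B"
  using assms indep_lc[OF assms(1) finite, of B] by metis

lemma not_indepD:
  fixes B :: "('a::{finite,field}^'n) set"
  assumes "is_subfield F" "\<not> indep_over F B"
  obtains c b where "c ` B \<subseteq> F" "lc B c = 0" "b \<in> B" "c b \<noteq> 0"
  using assms indep_lc[OF assms(1) finite, of B] by metis

lemma span_lcD:
  fixes B :: "('a::{finite,field}^'n) set"
  assumes "is_subfield F" "x \<in> span_over F B"
  obtains c where "c ` B \<subseteq> F" "x = lc B c"
  using assms span_lc[OF assms(1) finite, of B] by auto

lemma span_lcI:
  fixes B :: "('a::{finite,field}^'n) set"
  assumes "is_subfield F" "c ` B \<subseteq> F"
  shows "lc B c \<in> span_over F B"
  using assms span_lc[OF assms(1) finite, of B] by auto

lemma card_span_le: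
  fixes B :: "('a::{finite,field}^'n) set"
  assumes "is_subfield F"
  shows "card (span_over F B) \<le> card F ^ card B"
proof -
  have "span_over F B \<subseteq> (\<lambda>c. lc B c) ` (PiE B (\<lambda>_. F))"
  proof
    fix x assume "x \<in> span_over F B"
    then obtain c where h: "c ` B \<subseteq> F" "x = lc B c"
      using span_lcD[OF assms] by blast
    have "restrict c B \<in> PiE B (\<lambda>_. F)" using h(1) by auto
    moreover have "lc B (restrict c B) = x" using h(2) by (auto intro: lc_cong)
    ultimately show "x \<in> (\<lambda>c. lc B c) ` (PiE B (\<lambda>_. F))" by (metis image_eqI)
  qed
  then have "card (span_over F B) \<le> card ((\<lambda>c. lc B c) ` (PiE B (\<lambda>_. F)))"
    by (intro card_mono) auto
  also have "\<dots> \<le> card (PiE B (\<lambda>_. F))" by (rule card_image_le) (simp add: finite_PiE)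
  also have "\<dots> = card F ^ card B" by (simp add: card_PiE)
  finally show ?thesis .
qed

lemma card_span:
  fixes B :: "('a::{finite,field}^'n) set"
  assumes "is_subfield F" "indep_over F B"
  shows "card (span_over F B) = card F ^ card B"
proof -
  have "span_over F B = (\<lambda>c. lc B c) ` (PiE B (\<lambda>_. F))"
  proof
    show "span_over F B \<subseteq> (\<lambda>c. lc B c) ` (PiE B (\<lambda>_. F))"
    proof
      fix x assume "x \<in> span_over F B"
      then obtain c where h: "c ` B \<subseteq> F" "x = lc B c"
        using span_lcD[OF assms(1)] by blast
      have p: "restrict c B \<in> PiE B (\<lambda>_. F)" using h(1) by auto
      have r: "lc B (restrict c B) = lc B c" by (rule lc_cong) simp
      show "x \<in> (\<lambda>c. lc B c) ` (PiE B (\<lambda>_. F))"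
        by (rule image_eqI[where x="restrict c B"]) (use h(2) r p in simp_all)
    qed
    show "(\<lambda>c. lc B c) ` (PiE B (\<lambda>_. F)) \<subseteq> span_over F B"
      using span_lcI[OF assms(1)] by (auto simp: PiE_def Pi_def)
  qed
  moreover have "inj_on (\<lambda>c. lc B c) (PiE B (\<lambda>_. F))"
  proof (rule inj_onI)
    fix c d assume c: "c \<in> PiE B (\<lambda>_. F)" and d: "d \<in> PiE B (\<lambda>_. F)" and e: "lc B c = lc B d"
    have "lc B (\<lambda>b. c b - d b) = 0" using e lc_diff[of B c d] by simp
    moreover have "(\<lambda>b. c b - d b) ` B \<subseteq> F" using c d subF(7)[OF assms(1)] by (auto simp: PiE_def Pi_def)
    ultimately have "\<forall>b\<in>B. c b - d b = 0" using indep_lcD[OF assms] by blast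
    then show "c = d" using c d by (intro PiE_ext[OF c d]) auto
  qed
  ultimately have "card (span_over F B) = card (PiE B (\<lambda>_. F))" by (simp add: card_image)
  also have "\<dots> = card F ^ card B" by (simp add: card_PiE)
  finally show ?thesis .
qed

lemma indep_insert:
  fixes B :: "('a::{finite,field}^'n) set"
  assumes F: "is_subfield F" and i: "indep_over F B" and v: "v \<notin> span_over F B"
  shows "indep_over F (insert v B)" "v \<notin> B"
proof -
  show vB: "v \<notin> B" using v span_sup[OF F] by blast
  show "indep_over F (insert v B)"
  proof (rule indep_lcI[OF F])
    fix c assume h: "c ` insert v B \<subseteq> F" "lc (insert v B) c = 0"
    have e: "smul_vec (c v) v + lc B c = 0" using h lc_insert[OF vB] by metis
    have cv: "c v = 0"
    proof (rule ccontr)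
      assume n: "c v \<noteq> 0"
      have "smul_vec (c v) v = - lc B c" using e by (simp add: eq_neg_iff_add_eq_0)
      then have "smul_vec (inverse (c v)) (smul_vec (c v) v) = smul_vec (inverse (c v)) (- lc B c)" by simp
      then have "v = lc B (\<lambda>b. inverse (c v) * - c b)"
        using n by (simp add: smul_simps smul_neg lc_def smul_sum sum_negf)
      moreover have "(\<lambda>b. inverse (c v) * - c b) ` B \<subseteq> F"
        using h subF(4,5,6)[OF F] by auto
      ultimately have "v \<in> span_over F B" using span_lcI[OF F] by metis
      then show False using v by simp
    qed
    then have "lc B c = 0" using e by (simp add: smul_simps)
    moreover have "c ` B \<subseteq> F" using h by auto
    ultimately have "\<forall>b\<in>B. c b = 0" using indep_lcD[OF F i] by blast
    then show "\<forall>b\<in>insert v B. c b = 0" using cv by simp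
  qed
qed

lemma insert_indep_notin:
  fixes B :: "('a::{finite,field}^'n) set"
  assumes F: "is_subfield F" and i: "indep_over F (insert v B)" and vB: "v \<notin> B"
  shows "v \<notin> span_over F B"
proof
  assume "v \<in> span_over F B"
  then obtain c where h: "c ` B \<subseteq> F" "v = lc B c"
    using span_lcD[OF F] by blast
  define d where "d = c(v := -1)"
  have "lc (insert v B) d = smul_vec (-1) v + lc B d" using lc_insert[OF vB] d_def by simp
  also have "lc B d = lc B c" using vB by (intro lc_cong) (auto simp: d_def)
  finally have "lc (insert v B) d = 0" using h(2) by (simp add: smul_simps)
  moreover have "d ` insert v B \<subseteq> F" using h(1) subF(2,5)[OF F] vB by (auto simp: d_def)
  ultimately have "d v = 0" using indep_lcD[OF F i] by blast
  then show False by (simp add: d_def)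
qed

lemma dep_elem:
  fixes S :: "('a::{finite,field}^'n) set"
  assumes F: "is_subfield F" and n: "\<not> indep_over F S"
  shows "\<exists>v\<in>S. v \<in> span_over F (S - {v})"
proof -
  obtain c b where h: "c ` S \<subseteq> F" "lc S c = 0" "b \<in> S" "c b \<noteq> 0"
    using not_indepD[OF F n] by blast
  have "S = insert b (S - {b})" using h(3) by blast
  then have "smul_vec (c b) b + lc (S - {b}) c = 0" using h(2) lc_insert[of b "S - {b}" c] by simp
  then have "smul_vec (c b) b = - lc (S - {b}) c" by (simp add: eq_neg_iff_add_eq_0)
  then have "smul_vec (inverse (c b)) (smul_vec (c b) b) = smul_vec (inverse (c b)) (- lc (S - {b}) c)" by simp
  then have "b = lc (S - {b}) (\<lambda>x. inverse (c b) * - c x)"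
    using h(4) by (simp add: smul_simps smul_neg lc_def smul_sum sum_negf)
  moreover have "(\<lambda>x. inverse (c b) * - c x) ` (S - {b}) \<subseteq> F"
  proof (rule image_subsetI)
    fix x assume "x \<in> S - {b}"
    then have "c x \<in> F" "c b \<in> F" using h(1,3) by auto
    then show "inverse (c b) * - c x \<in> F" using subF(4,5,6)[OF F] by blast
  qed
  ultimately have "b \<in> span_over F (S - {b})" using span_lcI[OF F] by metis
  then show ?thesis using h(3) by blast
qed

lemma span_remove:
  fixes S :: "('a::{finite,field}^'n) set"
  assumes F: "is_subfield F" and "v \<in> S" "v \<in> span_over F (S - {v})"
  shows "span_over F S = span_over F (S - {v})"
proof
  show "span_over F (S - {v}) \<subseteq> span_over F S" by (rule span_mono) blast
  have "S \<subseteq> span_over F (S - {v})" using assms span_sup[OF F, of "S - {v}"] by blast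
  then show "span_over F S \<subseteq> span_over F (S - {v})"
    by (rule span_least[OF F span_subspace[OF F]])
qed

definition IL :: "'a::{finite,field} set \<Rightarrow> ('a^'n) set \<Rightarrow> nat \<Rightarrow> ('a^'n) list set" where
  "IL F W m = {vs. length vs = m \<and> distinct vs \<and> set vs \<subseteq> W \<and> indep_over F (set vs)}"

lemma finite_IL: "finite (IL F W m)"
proof -
  have "IL F W m \<subseteq> {vs. set vs \<subseteq> UNIV \<and> length vs = m}" unfolding IL_def by auto
  moreover have "finite {vs. set vs \<subseteq> (UNIV :: ('a^'n) set) \<and> length vs = m}"
    by (rule finite_lists_length_eq) simp
  ultimately show ?thesis by (rule finite_subset)
qed

lemma IL_0: "IL F W 0 = {[]}"
  unfolding IL_def indep_over_def by auto

lemma IL_Suc: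
  assumes F: "is_subfield F"
  shows "IL F W (Suc m) = (\<lambda>(vs,v). v # vs) ` (SIGMA vs:IL F W m. W - span_over F (set vs))"
proof
  show "IL F W (Suc m) \<subseteq> (\<lambda>(vs,v). v # vs) ` (SIGMA vs:IL F W m. W - span_over F (set vs))"
  proof
    fix x assume x: "x \<in> IL F W (Suc m)"
    then obtain v vs where xv: "x = v # vs" unfolding IL_def by (cases x) auto
    have h: "length vs = m" "distinct vs" "v \<notin> set vs" "set vs \<subseteq> W" "v \<in> W"
       "indep_over F (insert v (set vs))"
      using x unfolding xv IL_def by auto
    have "indep_over F (set vs)" using h(6) by (rule indep_mono) blast
    then have "vs \<in> IL F W m" using h unfolding IL_def by simp
    moreover have "v \<notin> span_over F (set vs)" using insert_indep_notin[OF F h(6) h(3)] .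
    ultimately have "(vs, v) \<in> (SIGMA vs:IL F W m. W - span_over F (set vs))" using h(5) by simp
    then show "x \<in> (\<lambda>(vs,v). v # vs) ` (SIGMA vs:IL F W m. W - span_over F (set vs))"
      unfolding xv by (rule image_eqI[rotated]) simp
  qed
next
  show "(\<lambda>(vs,v). v # vs) ` (SIGMA vs:IL F W m. W - span_over F (set vs)) \<subseteq> IL F W (Suc m)"
  proof clarify
    fix v vs assume vs: "vs \<in> IL F W m" and v: "v \<in> W" "v \<notin> span_over F (set vs)"
    have h: "length vs = m" "distinct vs" "set vs \<subseteq> W" "indep_over F (set vs)"
      using vs unfolding IL_def by auto
    have "indep_over F (insert v (set vs))" "v \<notin> set vs"
      using indep_insert[OF F h(4) v(2)] by auto
    then show "v # vs \<in> IL F W (Suc m)" using h v unfolding IL_def by simp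
  qed
qed

lemma card_IL:
  fixes W :: "('a::{finite,field}^'n) set"
  assumes F: "is_subfield F" and W: "subspace_over F W"
  shows "card (IL F W m) = (\<Prod>i<m. card W - card F ^ i)"
proof (induction m)
  case 0
  then show ?case by (simp add: IL_0)
next
  case (Suc m)
  have inj: "inj_on (\<lambda>(vs,v). v # vs) (SIGMA vs:IL F W m. W - span_over F (set vs))"
    by (rule inj_onI) auto
  have cd: "card (W - span_over F (set vs)) = card W - card F ^ m" if "vs \<in> IL F W m" for vs
  proof -
    have h: "length vs = m" "distinct vs" "set vs \<subseteq> W" "indep_over F (set vs)"
      using that unfolding IL_def by auto
    have "span_over F (set vs) \<subseteq> W" by (rule span_least[OF F W h(3)])
    then have "card (W - span_over F (set vs)) = card W - card (span_over F (set vs))"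
      by (simp add: card_Diff_subset)
    also have "card (span_over F (set vs)) = card F ^ m"
      using card_span[OF F h(4)] h(1,2) by (simp add: distinct_card)
    finally show ?thesis .
  qed
  have "card (IL F W (Suc m)) = card (SIGMA vs:IL F W m. W - span_over F (set vs))"
    unfolding IL_Suc[OF F] by (rule card_image[OF inj])
  also have "\<dots> = (\<Sum>vs\<in>IL F W m. card (W - span_over F (set vs)))"
    by (rule card_SigmaI) (auto simp: finite_IL)
  also have "\<dots> = (\<Sum>vs\<in>IL F W m. card W - card F ^ m)"
    by (rule sum.cong) (auto simp: cd)
  also have "\<dots> = card (IL F W m) * (card W - card F ^ m)" by simp
  finally show ?case using Suc.IH by simp
qed

lemma sum_lessThan_id: "(\<Sum>i<k. i) = k choose 2"
proof (induction k)
  case 0 then show ?case by simp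
next
  case (Suc k) then show ?case by (simp add: numeral_2_eq_2)
qed

lemma span_span_UNIV:
  fixes S :: "('a::{finite,field}^'n) set"
  assumes F: "is_subfield F"
  shows "span_over UNIV (span_over F S) = span_over UNIV S"
proof
  show "span_over UNIV S \<subseteq> span_over UNIV (span_over F S)"
    by (rule span_mono[OF span_sup[OF F]])
  show "span_over UNIV (span_over F S) \<subseteq> span_over UNIV S"
    by (rule span_least[OF is_subfield_UNIV span_subspace[OF is_subfield_UNIV]])
       (rule span_F_UNIV, simp)
qed

lemma subspace_UNIV: "subspace_over F (UNIV :: ('a::field^'n) set)"
  unfolding subspace_over_def by simp

lemma arith_final:
  fixes q g k s n :: nat
  assumes q: "q \<ge> 2" and g: "g \<ge> 1" and ks: "k \<le> s"
    and eq: "n * (\<Prod>i<k. q ^ k - q ^ i) = (\<Prod>i<k. (q ^ g) ^ s - (q ^ g) ^ i)"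
  shows "real n = real q ^ ((g - 1) * (k choose 2)) *
    (\<Prod>i<k. (real q powi (int g * (int s - int i)) - 1) / (real q ^ (k - i) - 1))"
proof -
  have q0: "real q > 1" using q by simp
  have f1: "real (q ^ k - q ^ i) = real q ^ i * (real q ^ (k - i) - 1)" if "i < k" for i
  proof -
    have "q ^ i \<le> q ^ k" using that q by (intro power_increasing) auto
    then have "real (q ^ k - q ^ i) = real q ^ k - real q ^ i" by (simp add: of_nat_diff)
    also have "real q ^ k = real q ^ i * real q ^ (k - i)" using that by (simp add: power_add[symmetric])
    finally show ?thesis by (simp add: algebra_simps)
  qed
  have f2: "real ((q ^ g) ^ s - (q ^ g) ^ i) = real q ^ i * (real q ^ ((g - 1) * i) *
      (real q powi (int g * (int s - int i)) - 1))" if "i < k" for i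
  proof -
    have "(q ^ g) ^ i \<le> (q ^ g) ^ s" using that ks q by (intro power_increasing) auto
    then have "real ((q ^ g) ^ s - (q ^ g) ^ i) = real q ^ (g * s) - real q ^ (g * i)"
      by (simp add: of_nat_diff power_mult)
    also have "real q ^ (g * s) = real q ^ (g * i) * real q ^ (g * (s - i))"
      using that ks by (simp add: power_add[symmetric] diff_mult_distrib2)
    also have "real q ^ (g * i) = real q ^ i * real q ^ ((g - 1) * i)"
      using g by (simp add: power_add[symmetric] diff_mult_distrib) 
    also have "real q ^ (g * (s - i)) = real q powi (int g * (int s - int i))"
    proof -
      have h: "int g * (int s - int i) = int (g * (s - i))" using that ks by (simp add: of_nat_diff)
      show ?thesis unfolding h power_int_of_nat ..
    qed
    finally show ?thesis by (simp add: algebra_simps)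
  qed
  have "real n * (\<Prod>i<k. real q ^ i) * (\<Prod>i<k. real q ^ (k - i) - 1) =
      real n * (\<Prod>i<k. real (q ^ k - q ^ i))"
    by (simp add: f1 prod.distrib)
  also have "\<dots> = (\<Prod>i<k. real ((q ^ g) ^ s - (q ^ g) ^ i))"
    using arg_cong[OF eq, of real] by simp
  also have "\<dots> = (\<Prod>i<k. real q ^ i) * ((\<Prod>i<k. real q ^ ((g - 1) * i)) *
      (\<Prod>i<k. real q powi (int g * (int s - int i)) - 1))"
    by (simp add: f2 prod.distrib)
  finally have e: "real n * (\<Prod>i<k. real q ^ (k - i) - 1) =
     (\<Prod>i<k. real q ^ ((g - 1) * i)) * (\<Prod>i<k. real q powi (int g * (int s - int i)) - 1)"
    using q0 by (simp add: prod_zero_iff)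
  have nz: "(\<Prod>i<k. real q ^ (k - i) - 1) \<noteq> 0"
  proof -
    have "real q ^ (k - i) - 1 \<noteq> 0" if "i < k" for i
    proof -
      have "real q ^ (k - i) > 1" using q0 that by (intro one_less_power) auto
      then show ?thesis by simp
    qed
    then show ?thesis by (simp add: prod_zero_iff)
  qed
  have p: "(\<Prod>i<k. real q ^ ((g - 1) * i)) = real q ^ ((g - 1) * (k choose 2))"
    by (simp add: power_sum[symmetric] sum_distrib_left[symmetric] sum_lessThan_id)
  have "real n = (\<Prod>i<k. real q ^ ((g - 1) * i)) * (\<Prod>i<k. real q powi (int g * (int s - int i)) - 1)
      / (\<Prod>i<k. real q ^ (k - i) - 1)"
    using e nz by (simp add: field_simps)
  then show ?thesis by (simp only: p prod_dividef times_divide_eq_right)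
qed

theorem lemma12:
  fixes F :: "'a::{finite,field} set" and q g k :: nat
  assumes "is_subfield F" and "card F = q" and "g \<ge> 1" and "CARD('a) = q ^ g" and "k \<ge> 1"
  shows "real (card (fat_subspaces F k :: ('a^'n::finite) set set)) =
    real q ^ ((g - 1) * (k choose 2)) *
    (\<Prod>i<k. (real q powi (int g * (int CARD('n) - int i)) - 1) / (real q ^ (k - i) - 1))"
proof -
  note F = assms(1)
  define s where "s = CARD('n)"
  define Q where "Q = q ^ g"
  define FS where "FS = (fat_subspaces F k :: ('a^'n) set set)"
  define T where "T = IL (UNIV :: 'a set) (UNIV :: ('a^'n) set) k"
  have q2: "q \<ge> 2"
  proof -
    have "{0, 1} \<subseteq> F" using subF(1,2)[OF F] by auto
    then have "card {0::'a, 1} \<le> card F" by (intro card_mono) auto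
    then show ?thesis using assms(2) by simp
  qed
  have Q2: "Q \<ge> 2"
  proof -
    have "q ^ 1 \<le> q ^ g" using assms(3) q2 by (intro power_increasing) auto
    then show ?thesis unfolding Q_def using q2 by simp
  qed
  have cardT: "card T = (\<Prod>i<k. Q ^ s - Q ^ i)"
  proof -
    have "card (IL (UNIV::'a set) (UNIV :: ('a^'n) set) k) =
       (\<Prod>i<k. card (UNIV::('a^'n) set) - card (UNIV::'a set) ^ i)"
      by (rule card_IL[OF is_subfield_UNIV subspace_UNIV])
    then show ?thesis unfolding T_def by (simp add: Q_def s_def assms(4))
  qed
  have img: "span_over F (set vs) \<in> FS" if "vs \<in> T" for vs
  proof -
    have h: "length vs = k" "distinct vs" "indep_over UNIV (set vs)"
      using that unfolding T_def IL_def by auto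
    have ck: "card (set vs) = k" using h by (simp add: distinct_card)
    have "has_dim_over F (span_over F (set vs)) k"
      unfolding has_dim_over_def
      by (intro exI[of _ "set vs"]) (simp add: ck span_sup[OF F] indep_UNIV[OF h(3)])
    moreover have "has_dim_over UNIV (span_over UNIV (span_over F (set vs))) k"
      unfolding has_dim_over_def span_span_UNIV[OF F]
      by (intro exI[of _ "set vs"]) (simp add: ck span_sup[OF is_subfield_UNIV] h(3))
    moreover have "subspace_over F (span_over F (set vs))" by (rule span_subspace[OF F])
    ultimately show ?thesis unfolding FS_def fat_subspaces_def by simp
  qed
  have cF: "card F ^ k = q ^ k" using assms(2) by simp
  have fib: "{vs \<in> T. span_over F (set vs) = U} = IL F U k" 
    and cfib: "card (IL F U k) = (\<Prod>i<k. q ^ k - q ^ i)" if U: "U \<in> FS" for U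
  proof -
    have sU: "subspace_over F U" and dF: "has_dim_over F U k"
      and dK: "has_dim_over UNIV (span_over UNIV U) k"
      using U unfolding FS_def fat_subspaces_def by auto
    obtain B0 where B0: "card B0 = k" "indep_over F B0" "span_over F B0 = U"
      using dF unfolding has_dim_over_def by blast
    obtain C0 where C0: "card C0 = k" "indep_over UNIV C0" "span_over UNIV C0 = span_over UNIV U"
      using dK unfolding has_dim_over_def by blast
    have cU: "card U = q ^ k" using card_span[OF F B0(2)] B0 assms(2) by simp
    have cKU: "card (span_over UNIV U) = Q ^ k"
      using card_span[OF is_subfield_UNIV C0(2)] C0 assms(4) Q_def by simp
    show "card (IL F U k) = (\<Prod>i<k. q ^ k - q ^ i)"
      using card_IL[OF F sU, of k] cU assms(2) by simp
    show "{vs \<in> T. span_over F (set vs) = U} = IL F U k"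
    proof
      show "{vs \<in> T. span_over F (set vs) = U} \<subseteq> IL F U k"
      proof clarify
        fix vs assume vs: "vs \<in> T" and e: "U = span_over F (set vs)"
        have h: "length vs = k" "distinct vs" "indep_over UNIV (set vs)"
          using vs unfolding T_def IL_def by auto
        show "vs \<in> IL F (span_over F (set vs)) k"
          unfolding IL_def using h span_sup[OF F, of "set vs"] indep_UNIV[OF h(3)] by simp
      qed
      show "IL F U k \<subseteq> {vs \<in> T. span_over F (set vs) = U}"
      proof
        fix vs assume vs: "vs \<in> IL F U k"
        have h: "length vs = k" "distinct vs" "set vs \<subseteq> U" "indep_over F (set vs)"
          using vs unfolding IL_def by auto
        have ck: "card (set vs) = k" using h by (simp add: distinct_card)
        have sub: "span_over F (set vs) \<subseteq> U" by (rule span_least[OF F sU h(3)])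
        have "card (span_over F (set vs)) = q ^ k"
          using card_span[OF F h(4)] ck assms(2) by simp
        then have eqU: "span_over F (set vs) = U"
          using sub cU by (intro card_subset_eq) auto
        have iK: "indep_over UNIV (set vs)"
        proof (rule ccontr)
          assume "\<not> indep_over UNIV (set vs)"
          then obtain v where v: "v \<in> set vs" "v \<in> span_over UNIV (set vs - {v})"
            using dep_elem[OF is_subfield_UNIV] by blast
          have "span_over UNIV U = span_over UNIV (set vs)"
            using span_span_UNIV[OF F, of "set vs"] eqU by simp
          also have "\<dots> = span_over UNIV (set vs - {v})"
            by (rule span_remove[OF is_subfield_UNIV v])
          finally have "Q ^ k = card (span_over UNIV (set vs - {v}))" using cKU by simp
          also have "\<dots> \<le> CARD('a) ^ card (set vs - {v})"
            by (rule card_span_le[OF is_subfield_UNIV])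
          also have "\<dots> = Q ^ (k - 1)" using ck v(1) assms(4) Q_def by simp
          finally have "Q ^ k \<le> Q ^ (k - 1)" .
          moreover have "Q ^ (k - 1) < Q ^ k" using Q2 assms(5) by (intro power_strict_increasing) auto
          ultimately show False by simp
        qed
        show "vs \<in> {vs \<in> T. span_over F (set vs) = U}"
          using h iK eqU unfolding T_def IL_def by simp
      qed
    qed
  qed
  have pos: "(\<Prod>i<k. q ^ k - q ^ i) > 0"
  proof -
    have "q ^ i < q ^ k" if "i < k" for i using q2 that by (intro power_strict_increasing) auto
    then show ?thesis by (simp add: prod_pos)
  qed
  have Tun: "T = (\<Union>U\<in>FS. IL F U k)"
  proof
    show "T \<subseteq> (\<Union>U\<in>FS. IL F U k)"
    proof
      fix vs assume vs: "vs \<in> T"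
      have U: "span_over F (set vs) \<in> FS" by (rule img[OF vs])
      have "vs \<in> {ws \<in> T. span_over F (set ws) = span_over F (set vs)}" using vs by simp
      then have "vs \<in> IL F (span_over F (set vs)) k" unfolding fib[OF U] .
      then show "vs \<in> (\<Union>U\<in>FS. IL F U k)" using U by (rule UN_I[rotated])
    qed
    show "(\<Union>U\<in>FS. IL F U k) \<subseteq> T"
    proof
      fix vs assume "vs \<in> (\<Union>U\<in>FS. IL F U k)"
      then obtain U where U: "U \<in> FS" and vU: "vs \<in> IL F U k" by blast
      have "vs \<in> {vs \<in> T. span_over F (set vs) = U}" unfolding fib[OF U] by (rule vU)
      then show "vs \<in> T" by simp
    qed
  qed
  have "card T = (\<Sum>U\<in>FS. card (IL F U k))"
    unfolding Tun
  proof (rule card_UN_disjoint)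
    show "finite FS" by simp
    show "\<forall>i\<in>FS. finite (IL F i k)" by (simp add: finite_IL)
    show "\<forall>i\<in>FS. \<forall>j\<in>FS. i \<noteq> j \<longrightarrow> IL F i k \<inter> IL F j k = {}"
    proof (intro ballI impI)
      fix i j assume i: "i \<in> FS" and j: "j \<in> FS" and ij: "i \<noteq> j"
      show "IL F i k \<inter> IL F j k = {}"
      proof (rule ccontr)
        assume "IL F i k \<inter> IL F j k \<noteq> {}"
        then obtain vs where vi: "vs \<in> IL F i k" and vj: "vs \<in> IL F j k" by blast
        have "vs \<in> {vs \<in> T. span_over F (set vs) = i}" unfolding fib[OF i] by (rule vi)
        moreover have "vs \<in> {vs \<in> T. span_over F (set vs) = j}" unfolding fib[OF j] by (rule vj)
        ultimately have "span_over F (set vs) = i" "span_over F (set vs) = j" by simp_all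
        then show False using ij by simp
      qed
    qed
  qed
  also have "\<dots> = card FS * (\<Prod>i<k. q ^ k - q ^ i)" using cfib by simp
  finally have main: "card FS * (\<Prod>i<k. q ^ k - q ^ i) = (\<Prod>i<k. (q ^ g) ^ s - (q ^ g) ^ i)"
    using cardT Q_def by simp
  show ?thesis
  proof (cases "k \<le> s")
    case True
    show ?thesis using arith_final[OF q2 assms(3) True main] unfolding FS_def s_def .
  next
    case False
    have "(\<Prod>i<k. (q ^ g) ^ s - (q ^ g) ^ i) = 0"
      by (rule prod_zero) (use False in \<open>auto intro!: bexI[where x=s]\<close>)
    then have "card FS * (\<Prod>i<k. q ^ k - q ^ i) = 0" using main by (simp only:)
    then have "card FS = 0 \<or> (\<Prod>i<k. q ^ k - q ^ i) = 0" by (simp only: mult_eq_0_iff)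
    then have "card FS = 0" using pos by (metis less_irrefl)
    moreover have "(\<Prod>i<k. (real q powi (int g * (int CARD('n) - int i)) - 1) / (real q ^ (k - i) - 1)) = 0"
      by (rule prod_zero) (use False in \<open>auto simp: s_def intro!: bexI[where x="CARD('n)"]\<close>)
    ultimately show ?thesis unfolding FS_def by simp
  qed
qed

end
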